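(* Consider a market with $n$ buyers, $m$ items and $T$ time periods, where item $j$ has per-period supply $s_j^t\ge 0$ and overall supply $s_j\ge 0$. Every buyer has budget $B_i=1$ and binary valuations $v_{ij}\in\{0,1\}$, and buyer $i$ has per-period demands $d_i^t\ge0$ with $d_i=\sum_t d_i^t$. A feasible allocation is $x=(x_{ij}^t)\ge 0$ with $\sum_i x_{ij}^t\le s_j^t$ for all $j,t$ and $\sum_{t,i}x_{ij}^t\le s_j$ for all $j$; buyer $i$'s utility is $u_i(x_i)=\sum_j v_{ij}\sum_t x_{ij}^t-d_i$. Assume there is a feasible allocation with $u_i(x_i)>0$ for all $i$. Then the set of leximin-optimal feasible allocations coincides with the set of maximum Nash welfare allocations, i.e. the optimal solutions of $$\max_{x\ge 0}\sum_i\log\Big(\sum_j v_{ij}\sum_t x_{ij}^t-d_i\Big)\ \text{ over feasible allocations}.$$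
   Context: Leximin order: for $v,\tilde v\in\mathbb{R}^n$ with nondecreasing rearrangements $v^*,\tilde v^*$, $v$ is leximin-greater than $\tilde v$ if there is $k$ with $v^*_i=\tilde v^*_i$ for $i<k$ and $v^*_k>\tilde v^*_k$. A feasible allocation $x$ is leximin-optimal if no feasible $\tilde x$ has $(u_i(\tilde x_i))_i$ leximin-greater than $(u_i(x_i))_i$. *)

theory Defs
  imports Complex_Main
begin

text \<open>Buyers are indexed by i < n, items by j < m, periods by t < T.
  An allocation is x i j t. Per-period supply st j t, overall supply S j,
  valuations v i j, per-period demands dt i t.\<close>

definition leximin_greater :: "real list \<Rightarrow> real list \<Rightarrow> bool" where
  "leximin_greater a b \<longleftrightarrow>
     (let a' = sort a; b' = sort b in
       \<exists>k < length a'. (\<forall>i<k. a' ! i = b' ! i) \<and> a' ! k > b' ! k)"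

definition feasible ::
  "nat \<Rightarrow> nat \<Rightarrow> nat \<Rightarrow> (nat \<Rightarrow> nat \<Rightarrow> real) \<Rightarrow> (nat \<Rightarrow> real)
   \<Rightarrow> (nat \<Rightarrow> nat \<Rightarrow> nat \<Rightarrow> real) \<Rightarrow> bool" where
  "feasible n m T st S x \<longleftrightarrow>
     (\<forall>i<n. \<forall>j<m. \<forall>t<T. x i j t \<ge> 0) \<and>
     (\<forall>j<m. \<forall>t<T. (\<Sum>i<n. x i j t) \<le> st j t) \<and>
     (\<forall>j<m. (\<Sum>t<T. \<Sum>i<n. x i j t) \<le> S j)"

definition utility ::
  "nat \<Rightarrow> nat \<Rightarrow> (nat \<Rightarrow> nat \<Rightarrow> real) \<Rightarrow> (nat \<Rightarrow> nat \<Rightarrow> real)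
   \<Rightarrow> (nat \<Rightarrow> nat \<Rightarrow> nat \<Rightarrow> real) \<Rightarrow> nat \<Rightarrow> real" where
  "utility m T v dt x i = (\<Sum>j<m. v i j * (\<Sum>t<T. x i j t)) - (\<Sum>t<T. dt i t)"

definition utilities ::
  "nat \<Rightarrow> nat \<Rightarrow> nat \<Rightarrow> (nat \<Rightarrow> nat \<Rightarrow> real) \<Rightarrow> (nat \<Rightarrow> nat \<Rightarrow> real)
   \<Rightarrow> (nat \<Rightarrow> nat \<Rightarrow> nat \<Rightarrow> real) \<Rightarrow> real list" where
  "utilities n m T v dt x = map (utility m T v dt x) [0..<n]"

definition leximin_optimal where
  "leximin_optimal n m T st S v dt x \<longleftrightarrow>
     feasible n m T st S x \<and>
     \<not> (\<exists>y. feasible n m T st S y \<and>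
            leximin_greater (utilities n m T v dt y) (utilities n m T v dt x))"

text \<open>Maximum Nash welfare: maximize the sum of logs of utilities; the objective is
  -\<infinity> (log of a nonpositive number) unless all utilities are positive, so optimal
  solutions are feasible allocations with positive utilities maximizing the sum.\<close>
definition max_nash_welfare where
  "max_nash_welfare n m T st S v dt x \<longleftrightarrow>
     feasible n m T st S x \<and> (\<forall>i<n. utility m T v dt x i > 0) \<and>
     (\<forall>y. feasible n m T st S y \<and> (\<forall>i<n. utility m T v dt y i > 0) \<longrightarrow>
        (\<Sum>i<n. ln (utility m T v dt y i)) \<le> (\<Sum>i<n. ln (utility m T v dt x i)))"

end

theory Submission
  imports Defs "HOL-Library.Multiset"
begin



definition Lsum :: "real \<Rightarrow> real list \<Rightarrow> real" where
  "Lsum c xs = sum_list (map (\<lambda>t. min t c) xs)"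

lemma Lsum_sort: "Lsum c (sort xs) = Lsum c xs"
  unfolding Lsum_def by (metis mset_map mset_sort sum_mset_sum_list)

lemma Lsum_nth: "Lsum c xs = (\<Sum>l<length xs. min (xs!l) c)"
  unfolding Lsum_def by (simp add: sum_list_sum_nth atLeast0LessThan)

lemma Lsum_map: "Lsum c (map f [0..<n]) = (\<Sum>l<n. min (f l) c)"
  unfolding Lsum_nth by simp

lemma core:
  assumes "sorted p" "sorted q" "length p = length q" "k < length p"
    "\<forall>l<k. p!l = q!l" "p!k < q!k"
  shows "Lsum (q!k) p < Lsum (q!k) q"
proof -
  have "(\<Sum>l<length p. min (p!l) (q!k)) < (\<Sum>l<length p. min (q!l) (q!k))"
  proof (rule sum_strict_mono_ex1)
    show "\<forall>l\<in>{..<length p}. min (p!l) (q!k) \<le> min (q!l) (q!k)"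
    proof
      fix l assume l: "l \<in> {..<length p}"
      show "min (p!l) (q!k) \<le> min (q!l) (q!k)"
      proof (cases "l < k")
        case True then show ?thesis using assms by simp
      next
        case False
        then have "q!k \<le> q!l" using sorted_nth_mono[OF assms(2)] l assms(3) by simp
        then show ?thesis by simp
      qed
    qed
    show "\<exists>a\<in>{..<length p}. min (p!a) (q!k) < min (q!a) (q!k)"
      using assms by (intro bexI[of _ k]) auto
  qed simp
  then show ?thesis unfolding Lsum_nth using assms(3) by simp
qed

lemma LG1:
  assumes "leximin_greater b a" "length a = length b"
  shows "\<exists>c. Lsum c a < Lsum c b"
proof -
  obtain k where k: "k < length (sort b)" "\<forall>i<k. sort b ! i = sort a ! i"
    "sort b ! k > sort a ! k"
    using assms(1) unfolding leximin_greater_def Let_def by blast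
  have "Lsum (sort b ! k) (sort a) < Lsum (sort b ! k) (sort b)"
    by (rule core) (use k assms(2) in auto)
  then show ?thesis by (auto simp: Lsum_sort)
qed

lemma LG2:
  assumes "length a = length b" "\<forall>c. Lsum c a \<le> Lsum c b" "\<exists>c. Lsum c a < Lsum c b"
  shows "leximin_greater b a"
proof -
  define a' where "a' = sort a"
  define b' where "b' = sort b"
  have len: "length a' = length b'" using assms(1) by (simp add: a'_def b'_def)
  have ne: "a' \<noteq> b'"
  proof
    assume eq: "a' = b'"
    obtain c where "Lsum c a < Lsum c b" using assms(3) by blast
    moreover have "Lsum c a = Lsum c b"
      using eq Lsum_sort[of c a] Lsum_sort[of c b] unfolding a'_def b'_def by simp
    ultimately show False by simp
  qed
  have ex: "\<exists>l. l < length b' \<and> b'!l \<noteq> a'!l"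
  proof (rule ccontr)
    assume "\<not> ?thesis"
    then have "\<forall>l<length b'. b'!l = a'!l" by simp
    then have "b' = a'" using len by (intro nth_equalityI) auto
    then show False using ne by simp
  qed
  define k where "k = (LEAST l. l < length b' \<and> b'!l \<noteq> a'!l)"
  have k: "k < length b' \<and> b'!k \<noteq> a'!k" unfolding k_def by (rule LeastI_ex[OF ex])
  have pre: "\<forall>l<k. b'!l = a'!l"
  proof (intro allI impI)
    fix l assume l: "l < k"
    then have "\<not> (l < length b' \<and> b'!l \<noteq> a'!l)" unfolding k_def by (rule not_less_Least)
    moreover have "l < length b'" using l k by simp
    ultimately show "b'!l = a'!l" by simp
  qed
  show ?thesis
  proof (cases "a'!k < b'!k")
    case True
    have "\<exists>k<length b'. (\<forall>i<k. b' ! i = a' ! i) \<and> a' ! k < b' ! k"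
      using k pre True by blast
    then show ?thesis unfolding leximin_greater_def Let_def a'_def b'_def .
  next
    case False
    then have lt: "b'!k < a'!k" using k by (simp add: not_less order.order_iff_strict)
    have "Lsum (a'!k) b' < Lsum (a'!k) a'"
    proof (rule core)
      show "sorted b'" by (simp add: b'_def)
      show "sorted a'" by (simp add: a'_def)
      show "length b' = length a'" using len by simp
      show "k < length b'" using k by simp
      show "\<forall>l<k. b'!l = a'!l" by (fact pre)
      show "b'!k < a'!k" by (fact lt)
    qed
    then have "Lsum (a'!k) b < Lsum (a'!k) a" unfolding a'_def b'_def Lsum_sort .
    moreover have "Lsum (a'!k) a \<le> Lsum (a'!k) b" using assms(2) by blast
    ultimately show ?thesis by simp
  qed
qed

lemma abel:
  fixes a f w :: "nat \<Rightarrow> real"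
  assumes "finite I" "\<forall>k\<in>I. (\<Sum>i\<in>{i\<in>I. a i \<le> a k}. f i) \<le> 0"
    "\<forall>i\<in>I. w i \<ge> 0" "\<forall>i\<in>I. \<forall>k\<in>I. a i \<le> a k \<longrightarrow> w k \<le> w i"
  shows "(\<Sum>i\<in>I. w i * f i) \<le> 0"
  using assms
proof (induction "card I" arbitrary: I w rule: less_induct)
  case less
  show ?case
  proof (cases "I = {}")
    case True then show ?thesis by simp
  next
    case False
    have "Max (a ` I) \<in> a ` I" using less.prems(1) False by (intro Max_in) auto
    then obtain M where M1: "M \<in> I" "a M = Max (a ` I)" by auto
    have M2: "\<forall>i\<in>I. a i \<le> a M" unfolding M1(2) using less.prems(1) by auto
    note M = M1(1) M2
    define I' where "I' = {i\<in>I. a i < a M}"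
    have fin': "finite I'" using less.prems(1) by (simp add: I'_def)
    have card': "card I' < card I"
      using M(1) less.prems(1) by (intro psubset_card_mono) (auto simp: I'_def)
    have s1: "(\<Sum>i\<in>I. w i * f i) = (\<Sum>i\<in>I. (w i - w M) * f i) + w M * (\<Sum>i\<in>I. f i)"
    proof -
      have "(\<Sum>i\<in>I. w i * f i) = (\<Sum>i\<in>I. (w i - w M) * f i + w M * f i)"
        by (rule sum.cong) (simp_all add: algebra_simps)
      then show ?thesis by (simp add: sum.distrib sum_distrib_left)
    qed
    have "{i\<in>I. a i \<le> a M} = I" using M by auto
    moreover have "(\<Sum>i\<in>{i\<in>I. a i \<le> a M}. f i) \<le> 0" using less.prems(2) M(1) by blast
    ultimately have sf: "(\<Sum>i\<in>I. f i) \<le> 0" by simp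
    have wM: "w M \<ge> 0" using less.prems(3) M by auto
    have z: "\<forall>i\<in>I - I'. (w i - w M) * f i = 0"
    proof
      fix i assume i: "i \<in> I - I'"
      then have "a i = a M" using M by (auto simp: I'_def)
      then have "w i = w M" using less.prems(4) i M(1)
      proof -
        have iI: "i \<in> I" using i by simp
        have "w M \<le> w i" using less.prems(4) iI M(1) \<open>a i = a M\<close> by auto
        moreover have "w i \<le> w M" using less.prems(4) iI M(1) \<open>a i = a M\<close> by auto
        ultimately show ?thesis by simp
      qed
      then show "(w i - w M) * f i = 0" by simp
    qed
    have s2: "(\<Sum>i\<in>I. (w i - w M) * f i) = (\<Sum>i\<in>I'. (w i - w M) * f i)"
      using sum.mono_neutral_right[OF less.prems(1) _ z] by (auto simp: I'_def)
    have ih: "(\<Sum>i\<in>I'. (w i - w M) * f i) \<le> 0"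
    proof (rule less.hyps[OF card' fin'])
      show "\<forall>k\<in>I'. (\<Sum>i\<in>{i \<in> I'. a i \<le> a k}. f i) \<le> 0"
      proof
        fix k assume k: "k \<in> I'"
        then have "{i \<in> I'. a i \<le> a k} = {i\<in>I. a i \<le> a k}" by (auto simp: I'_def)
        then show "(\<Sum>i\<in>{i \<in> I'. a i \<le> a k}. f i) \<le> 0"
          using less.prems(2) k by (auto simp: I'_def)
      qed
      show "\<forall>i\<in>I'. 0 \<le> w i - w M" using less.prems(4) M by (auto simp: I'_def)
      show "\<forall>i\<in>I'. \<forall>k\<in>I'. a i \<le> a k \<longrightarrow> w k - w M \<le> w i - w M"
        using less.prems(4) by (auto simp: I'_def)
    qed
    have "w M * (\<Sum>i\<in>I. f i) \<le> 0" using wM sf by (simp add: mult_nonneg_nonpos)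
    then show ?thesis using s1 s2 ih by linarith
  qed
qed



definition condC where
  "condC n m T st S v dt x \<longleftrightarrow> (\<forall>i<n. \<forall>j<m. v i j = 1 \<longrightarrow>
     (\<forall>y. feasible n m T st S y \<longrightarrow> (\<Sum>t<T. \<Sum>k<n. y k j t) \<le> (\<Sum>t<T. \<Sum>k<n. x k j t)) \<and>
     (\<forall>k<n. (\<Sum>t<T. x k j t) > 0 \<longrightarrow> v k j = 1 \<and> utility m T v dt x k \<le> utility m T v dt x i))"

lemma condC_sat:
  assumes "condC n m T st S v dt x" "i < n" "j < m" "v i j = 1" "feasible n m T st S y"
  shows "(\<Sum>t<T. \<Sum>k<n. y k j t) \<le> (\<Sum>t<T. \<Sum>k<n. x k j t)"
  using assms unfolding condC_def by blast

lemma condC_hold: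
  assumes "condC n m T st S v dt x" "i < n" "j < m" "v i j = 1" "k < n" "(\<Sum>t<T. x k j t) > 0"
  shows "v k j = 1 \<and> utility m T v dt x k \<le> utility m T v dt x i"
  using assms unfolding condC_def by blast

lemma feas_tot_nonneg:
  assumes "feasible n m T st S z" "i < n" "j < m"
  shows "(\<Sum>t<T. z i j t) \<ge> 0"
  using assms unfolding feasible_def by (auto intro: sum_nonneg)

lemma H:
  assumes vb: "\<forall>i<n. \<forall>j<m. v i j \<in> {0,1}" and fx: "feasible n m T st S x"
    and C: "condC n m T st S v dt x" and fy: "feasible n m T st S y"
  shows "(\<Sum>i\<in>{i\<in>{..<n}. utility m T v dt x i \<le> c}. utility m T v dt y i)
       \<le> (\<Sum>i\<in>{i\<in>{..<n}. utility m T v dt x i \<le> c}. utility m T v dt x i)"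
proof -
  define A where "A = {i\<in>{..<n}. utility m T v dt x i \<le> c}"
  define N where "N = {j\<in>{..<m}. \<exists>i\<in>A. v i j = 1}"
  define G where "G z i = (\<Sum>j<m. v i j * (\<Sum>t<T. z i j t))" for z i
  have U: "utility m T v dt z i = G z i - (\<Sum>t<T. dt i t)" for z i
    by (simp add: utility_def G_def)
  have finA: "finite A" and An: "A \<subseteq> {..<n}" by (auto simp: A_def)
  have finN: "finite N" and Nm: "N \<subseteq> {..<m}" by (auto simp: N_def)
  have GN: "G z i = (\<Sum>j\<in>N. v i j * (\<Sum>t<T. z i j t))" if "i \<in> A" for z i
  proof -
    have "\<forall>j\<in>{..<m} - N. v i j * (\<Sum>t<T. z i j t) = 0"
    proof
      fix j assume j: "j \<in> {..<m} - N"
      have "i < n" using that An by auto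
      then have "v i j \<in> {0,1}" using vb j by auto
      moreover have "v i j \<noteq> 1" using j that unfolding N_def by auto
      ultimately show "v i j * (\<Sum>t<T. z i j t) = 0" by auto
    qed
    from sum.mono_neutral_right[OF _ Nm this] show ?thesis unfolding G_def by simp
  qed
  have "sum (G y) A = (\<Sum>i\<in>A. \<Sum>j\<in>N. v i j * (\<Sum>t<T. y i j t))"
    using GN by simp
  also have "\<dots> \<le> (\<Sum>i\<in>A. \<Sum>j\<in>N. (\<Sum>t<T. y i j t))"
  proof (intro sum_mono)
    fix i j assume i: "i \<in> A" and j: "j \<in> N"
    then have "i < n" "j < m" using An Nm by auto
    then have "v i j \<in> {0,1}" "0 \<le> (\<Sum>t<T. y i j t)"
      using vb feas_tot_nonneg[OF fy] by auto
    then show "v i j * (\<Sum>t<T. y i j t) \<le> (\<Sum>t<T. y i j t)" by auto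
  qed
  also have "\<dots> = (\<Sum>j\<in>N. \<Sum>i\<in>A. (\<Sum>t<T. y i j t))" by (rule sum.swap)
  also have "\<dots> \<le> (\<Sum>j\<in>N. \<Sum>i<n. (\<Sum>t<T. y i j t))"
  proof (intro sum_mono sum_mono2)
    fix j i assume j: "j \<in> N" and i: "i \<in> {..<n} - A"
    then show "0 \<le> (\<Sum>t<T. y i j t)" using Nm feas_tot_nonneg[OF fy] by auto
  qed (use An in auto)
  also have "\<dots> \<le> (\<Sum>j\<in>N. \<Sum>i<n. (\<Sum>t<T. x i j t))"
  proof (rule sum_mono)
    fix j assume j: "j \<in> N"
    then obtain i0 where "i0 \<in> A" "v i0 j = 1" "j < m" unfolding N_def by auto
    then have "(\<Sum>t<T. \<Sum>k<n. y k j t) \<le> (\<Sum>t<T. \<Sum>k<n. x k j t)"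
      using condC_sat[OF C _ _ _ fy] An by auto
    then show "(\<Sum>i<n. (\<Sum>t<T. y i j t)) \<le> (\<Sum>i<n. (\<Sum>t<T. x i j t))"
      by (metis sum.swap)
  qed
  also have "\<dots> = (\<Sum>j\<in>N. \<Sum>i\<in>A. v i j * (\<Sum>t<T. x i j t))"
  proof (rule sum.cong[OF refl])
    fix j assume j: "j \<in> N"
    then obtain i0 where i0: "i0 \<in> A" "v i0 j = 1" "j < m" unfolding N_def by auto
    have hold: "v k j = 1 \<and> utility m T v dt x k \<le> utility m T v dt x i0"
      if "k < n" "(\<Sum>t<T. x k j t) > 0" for k
      using condC_hold[OF C _ i0(3) i0(2) that] i0(1) An by auto
    have "(\<Sum>i<n. (\<Sum>t<T. x i j t)) = (\<Sum>i\<in>A. (\<Sum>t<T. x i j t))"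
    proof -
      have "\<forall>i\<in>{..<n} - A. (\<Sum>t<T. x i j t) = 0"
      proof
        fix i assume i: "i \<in> {..<n} - A"
        have "(\<Sum>t<T. x i j t) \<ge> 0" using i i0 feas_tot_nonneg[OF fx] by auto
        moreover have "\<not> (\<Sum>t<T. x i j t) > 0"
        proof
          assume "(\<Sum>t<T. x i j t) > 0"
          then have "utility m T v dt x i \<le> utility m T v dt x i0" using hold i by auto
          then show False using i i0(1) unfolding A_def by auto
        qed
        ultimately show "(\<Sum>t<T. x i j t) = 0" by simp
      qed
      from sum.mono_neutral_right[OF _ An this] show ?thesis by simp
    qed
    also have "\<dots> = (\<Sum>i\<in>A. v i j * (\<Sum>t<T. x i j t))"
    proof (intro sum.cong refl)
      fix i assume i: "i \<in> A"
      have "(\<Sum>t<T. x i j t) \<ge> 0" using i i0 An feas_tot_nonneg[OF fx] by auto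
      then show "(\<Sum>t<T. x i j t) = v i j * (\<Sum>t<T. x i j t)"
        using hold[of i] i An by (cases "(\<Sum>t<T. x i j t) > 0") auto
    qed
    finally show "(\<Sum>i<n. (\<Sum>t<T. x i j t)) = (\<Sum>i\<in>A. v i j * (\<Sum>t<T. x i j t))" .
  qed
  also have "\<dots> = (\<Sum>i\<in>A. \<Sum>j\<in>N. v i j * (\<Sum>t<T. x i j t))" by (rule sum.swap)
  also have "\<dots> = sum (G x) A" using GN by simp
  finally have "sum (G y) A \<le> sum (G x) A" .
  then have "(\<Sum>i\<in>A. utility m T v dt y i) \<le> (\<Sum>i\<in>A. utility m T v dt x i)"
    by (simp add: U sum_subtractf)
  then show ?thesis by (simp add: A_def)
qed



lemma L_fromC:
  assumes vb: "\<forall>i<n. \<forall>j<m. v i j \<in> {0,1}" and fx: "feasible n m T st S x"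
    and C: "condC n m T st S v dt x" and fy: "feasible n m T st S y"
  shows "(\<Sum>i<n. min (utility m T v dt y i) c) \<le> (\<Sum>i<n. min (utility m T v dt x i) c)"
proof -
  let ?a = "utility m T v dt x" and ?b = "utility m T v dt y"
  define w where "w i = (if ?a i \<le> c then 1 else (0::real))" for i
  have "(\<Sum>i\<in>{..<n}. w i * (?b i - ?a i)) \<le> 0"
  proof (rule abel)
    show "\<forall>k\<in>{..<n}. (\<Sum>i\<in>{i \<in> {..<n}. ?a i \<le> ?a k}. ?b i - ?a i) \<le> 0"
      using H[OF vb fx C fy] by (simp add: sum_subtractf)
    show "\<forall>i\<in>{..<n}. 0 \<le> w i" by (simp add: w_def)
    show "\<forall>i\<in>{..<n}. \<forall>k\<in>{..<n}. ?a i \<le> ?a k \<longrightarrow> w k \<le> w i"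
      by (auto simp: w_def)
  qed simp
  moreover have "(\<Sum>i<n. min (?b i) c - min (?a i) c) \<le> (\<Sum>i\<in>{..<n}. w i * (?b i - ?a i))"
    by (rule sum_mono) (auto simp: w_def min_def)
  ultimately show ?thesis by (simp add: sum_subtractf)
qed

lemma MNW_fromC:
  assumes vb: "\<forall>i<n. \<forall>j<m. v i j \<in> {0,1}" and fx: "feasible n m T st S x"
    and C: "condC n m T st S v dt x" and fy: "feasible n m T st S y"
    and xp: "\<forall>i<n. utility m T v dt x i > 0" and yp: "\<forall>i<n. utility m T v dt y i > 0"
  shows "(\<Sum>i<n. ln (utility m T v dt y i)) \<le> (\<Sum>i<n. ln (utility m T v dt x i))"
proof -
  let ?a = "utility m T v dt x" and ?b = "utility m T v dt y"
  define w where "w i = 1 / ?a i" for i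
  have "(\<Sum>i\<in>{..<n}. w i * (?b i - ?a i)) \<le> 0"
  proof (rule abel)
    show "\<forall>k\<in>{..<n}. (\<Sum>i\<in>{i \<in> {..<n}. ?a i \<le> ?a k}. ?b i - ?a i) \<le> 0"
      using H[OF vb fx C fy] by (simp add: sum_subtractf)
    show "\<forall>i\<in>{..<n}. 0 \<le> w i" using xp by (simp add: w_def less_imp_le)
    show "\<forall>i\<in>{..<n}. \<forall>k\<in>{..<n}. ?a i \<le> ?a k \<longrightarrow> w k \<le> w i"
      using xp by (auto simp: w_def intro!: divide_left_mono mult_pos_pos)
  qed simp
  moreover have "(\<Sum>i<n. ln (?b i) - ln (?a i)) \<le> (\<Sum>i\<in>{..<n}. w i * (?b i - ?a i))"
  proof (rule sum_mono)
    fix i assume "i \<in> {..<n}"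
    then have a: "?a i > 0" and b: "?b i > 0" using xp yp by auto
    have "ln (?b i) - ln (?a i) = ln (?b i / ?a i)" using a b by (simp add: ln_div)
    also have "\<dots> \<le> ?b i / ?a i - 1" using a b by (intro ln_le_minus_one) simp
    also have "\<dots> = w i * (?b i - ?a i)" using a by (simp add: w_def field_simps)
    finally show "ln (?b i) - ln (?a i) \<le> w i * (?b i - ?a i)" .
  qed
  ultimately show ?thesis by (simp add: sum_subtractf)
qed

lemma pos_fromC:
  assumes vb: "\<forall>i<n. \<forall>j<m. v i j \<in> {0,1}" and fx: "feasible n m T st S x"
    and C: "condC n m T st S v dt x" and fz: "feasible n m T st S z"
    and zp: "\<forall>i<n. utility m T v dt z i > 0"
  shows "\<forall>i<n. utility m T v dt x i > 0"
proof (rule ccontr)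
  assume "\<not> ?thesis"
  then obtain i where i: "i < n" "utility m T v dt x i \<le> 0" by (auto simp: not_less)
  define A where "A = {l\<in>{..<n}. utility m T v dt x l \<le> utility m T v dt x i}"
  have h: "(\<Sum>l\<in>A. utility m T v dt z l) \<le> (\<Sum>l\<in>A. utility m T v dt x l)"
    unfolding A_def by (rule H[OF vb fx C fz])
  have iA: "i \<in> A" using i by (simp add: A_def)
  have "(\<Sum>l\<in>A. utility m T v dt z l) > 0"
    using iA zp by (intro sum_pos) (auto simp: A_def)
  moreover have "(\<Sum>l\<in>A. utility m T v dt x l) \<le> 0"
    using i by (intro sum_nonpos) (auto simp: A_def)
  ultimately show False using h by linarith
qed

lemma util_shift:
  assumes "j < m"
  shows "utility m T v dt (\<lambda>a b c. x a b c + (if b = j then e a c else 0)) l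
       = utility m T v dt x l + v l j * (\<Sum>t<T. e l t)"
proof -
  have inner: "(\<Sum>t<T. x l j' t + (if j' = j then e l t else 0))
      = (\<Sum>t<T. x l j' t) + (if j' = j then (\<Sum>t<T. e l t) else 0)" for j'
    by (cases "j' = j") (simp_all add: sum.distrib)
  have "(\<Sum>j'<m. v l j' * (if j' = j then (\<Sum>t<T. e l t) else 0))
      = (\<Sum>j'<m. if j' = j then v l j * (\<Sum>t<T. e l t) else 0)"
    by (rule sum.cong) auto
  also have "\<dots> = v l j * (\<Sum>t<T. e l t)" using assms by simp
  finally have d: "(\<Sum>j'<m. v l j' * (if j' = j then (\<Sum>t<T. e l t) else 0)) = v l j * (\<Sum>t<T. e l t)" .
  show ?thesis unfolding utility_def inner
    by (simp add: distrib_left sum.distrib d)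
qed

lemma feas_shift:
  assumes fx: "feasible n m T st S x" and j: "j < m"
    and nn: "\<forall>a<n. \<forall>t<T. x a j t + e a t \<ge> 0"
    and per: "\<forall>t<T. (\<Sum>a<n. x a j t + e a t) \<le> st j t"
    and tot: "(\<Sum>t<T. \<Sum>a<n. x a j t + e a t) \<le> S j"
  shows "feasible n m T st S (\<lambda>a b c. x a b c + (if b = j then e a c else 0))"
  unfolding feasible_def
proof (intro conjI allI impI)
  fix i j' t assume "i < n" "j' < m" "t < T"
  then show "0 \<le> x i j' t + (if j' = j then e i t else 0)"
    using fx nn unfolding feasible_def by auto
next
  fix j' t assume "j' < m" "t < T"
  then show "(\<Sum>i<n. x i j' t + (if j' = j then e i t else 0)) \<le> st j' t"
    using fx per unfolding feasible_def by (cases "j' = j") auto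
next
  fix j' assume "j' < m"
  then show "(\<Sum>t<T. \<Sum>i<n. x i j' t + (if j' = j then e i t else 0)) \<le> S j'"
    using fx tot unfolding feasible_def by (cases "j' = j") auto
qed

lemma delta2:
  fixes n i k :: nat
  assumes "i < n" "k < n" "i \<noteq> k"
  shows "(\<Sum>a<n. if a = i then A else if a = k then B else (0::real)) = A + B"
proof -
  have "(\<Sum>a<n. if a = i then A else if a = k then B else (0::real))
      = (\<Sum>a<n. (if a = i then A else 0) + (if a = k then B else 0))"
    by (rule sum.cong) (use assms in auto)
  also have "\<dots> = (\<Sum>a<n. (if a = i then A else 0)) + (\<Sum>a<n. (if a = k then B else (0::real)))"
    by (simp add: sum.distrib)
  also have "\<dots> = A + B" using assms(1,2) by simp
  finally show ?thesis .
qed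

lemma transfer:
  assumes fx: "feasible n m T st S x" and ik: "i < n" "k < n" "i \<noteq> k" and j: "j < m"
    and lam: "0 \<le> lam" "lam \<le> 1"
  defines "e \<equiv> (\<lambda>a c. if a = i then lam * x k j c else if a = k then - (lam * x k j c) else 0)"
  shows "feasible n m T st S (\<lambda>a b c. x a b c + (if b = j then e a c else 0))"
    "\<And>l. utility m T v dt (\<lambda>a b c. x a b c + (if b = j then e a c else 0)) l
       = utility m T v dt x l + v l j * (if l = i then lam * (\<Sum>t<T. x k j t)
            else if l = k then - (lam * (\<Sum>t<T. x k j t)) else 0)"
proof -
  have z: "(\<Sum>a<n. e a t) = 0" for t
    unfolding e_def using delta2[OF ik] by simp
  have s: "(\<Sum>a<n. x a j t + e a t) = (\<Sum>a<n. x a j t)" for t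
    by (simp add: sum.distrib z)
  have nn: "\<forall>a<n. \<forall>t<T. x a j t + e a t \<ge> 0"
  proof (intro allI impI)
    fix a t assume "a < n" "t < T"
    then have "x a j t \<ge> 0" "x k j t \<ge> 0" using fx ik j unfolding feasible_def by auto
    then show "x a j t + e a t \<ge> 0" using lam unfolding e_def
      by (auto simp: algebra_simps mult_left_le_one_le)
  qed
  show "feasible n m T st S (\<lambda>a b c. x a b c + (if b = j then e a c else 0))"
    by (rule feas_shift[OF fx j nn]) (use fx j in \<open>simp_all add: s feasible_def\<close>)
  fix l
  have "(\<Sum>t<T. e l t) = (if l = i then lam * (\<Sum>t<T. x k j t)
            else if l = k then - (lam * (\<Sum>t<T. x k j t)) else 0)"
    unfolding e_def by (simp add: sum_distrib_left sum_negf)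
  then show "utility m T v dt (\<lambda>a b c. x a b c + (if b = j then e a c else 0)) l
       = utility m T v dt x l + v l j * (if l = i then lam * (\<Sum>t<T. x k j t)
            else if l = k then - (lam * (\<Sum>t<T. x k j t)) else 0)"
    using util_shift[OF j] by simp
qed



lemma perturb:
  assumes vb: "\<forall>i<n. \<forall>j<m. v i j \<in> {0,1}" and fx: "feasible n m T st S x"
    and nC: "\<not> condC n m T st S v dt x"
  shows "(\<exists>y i \<epsilon>. feasible n m T st S y \<and> i < n \<and> \<epsilon> > 0 \<and>
            (\<forall>l<n. utility m T v dt y l = utility m T v dt x l + (if l = i then \<epsilon> else 0)))
       \<or> (\<exists>y i k \<epsilon>. feasible n m T st S y \<and> i < n \<and> k < n \<and> i \<noteq> k \<and> \<epsilon> > 0 \<and>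
            2 * \<epsilon> \<le> utility m T v dt x k - utility m T v dt x i \<and>
            (\<forall>l<n. utility m T v dt y l = utility m T v dt x l +
                 (if l = i then \<epsilon> else if l = k then - \<epsilon> else 0)))"
proof -
  let ?U = "utility m T v dt"
  obtain i j where i: "i < n" and j: "j < m" and vij: "v i j = 1" and
    alt: "(\<exists>z. feasible n m T st S z \<and> \<not> (\<Sum>t<T. \<Sum>k<n. z k j t) \<le> (\<Sum>t<T. \<Sum>k<n. x k j t))
        \<or> (\<exists>k<n. (\<Sum>t<T. x k j t) > 0 \<and> \<not> (v k j = 1 \<and> ?U x k \<le> ?U x i))"
    using nC unfolding condC_def by blast
  from alt show ?thesis
  proof
    assume "\<exists>z. feasible n m T st S z \<and> \<not> (\<Sum>t<T. \<Sum>k<n. z k j t) \<le> (\<Sum>t<T. \<Sum>k<n. x k j t)"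
    then obtain z where fz: "feasible n m T st S z"
      and more: "(\<Sum>t<T. \<Sum>k<n. z k j t) > (\<Sum>t<T. \<Sum>k<n. x k j t)" by auto
    define \<delta> where "\<delta> t = (\<Sum>k<n. z k j t) - (\<Sum>k<n. x k j t)" for t
    define D where "D = (\<Sum>t<T. \<delta> t)"
    define P where "P = (\<Sum>t<T. max (\<delta> t) 0)"
    have D: "D = (\<Sum>t<T. \<Sum>k<n. z k j t) - (\<Sum>t<T. \<Sum>k<n. x k j t)"
      by (simp add: D_def \<delta>_def sum_subtractf)
    have Dpos: "D > 0" using more D by simp
    have DP: "D \<le> P" unfolding D_def P_def by (rule sum_mono) simp
    define lam where "lam = D / P"
    have Ppos: "P > 0" using Dpos DP by simp
    have lam0: "lam > 0" and lam1: "lam \<le> 1" using Dpos DP Ppos by (auto simp: lam_def)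
    define e where "e a t = (if a = i then lam * max (\<delta> t) 0 else 0)" for a t
    have se: "(\<Sum>a<n. x a j t + e a t) = (\<Sum>a<n. x a j t) + lam * max (\<delta> t) 0" for t
      using i by (simp add: sum.distrib e_def)
    have fy: "feasible n m T st S (\<lambda>a b c. x a b c + (if b = j then e a c else 0))"
    proof (rule feas_shift[OF fx j])
      show "\<forall>a<n. \<forall>t<T. 0 \<le> x a j t + e a t"
        using fx j lam0 unfolding feasible_def e_def by auto
      show "\<forall>t<T. (\<Sum>a<n. x a j t + e a t) \<le> st j t"
      proof (intro allI impI)
        fix t assume t: "t < T"
        have zs: "(\<Sum>k<n. z k j t) \<le> st j t" and xs: "(\<Sum>k<n. x k j t) \<le> st j t"
          using fz fx j t unfolding feasible_def by auto
        show "(\<Sum>a<n. x a j t + e a t) \<le> st j t"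
        proof (cases "\<delta> t \<le> 0")
          case True then show ?thesis using xs se[of t] by simp
        next
          case False
          then have "lam * max (\<delta> t) 0 \<le> \<delta> t"
            using lam1 by (simp add: mult_left_le_one_le)
          then show ?thesis using zs se[of t] unfolding \<delta>_def by linarith
        qed
      qed
      have "(\<Sum>t<T. \<Sum>a<n. x a j t + e a t) = (\<Sum>t<T. \<Sum>a<n. x a j t) + lam * P"
        by (subst sum.cong[OF refl se]) (simp add: sum.distrib P_def sum_distrib_left)
      also have "lam * P = D" using Ppos by (simp add: lam_def)
      finally show "(\<Sum>t<T. \<Sum>a<n. x a j t + e a t) \<le> S j"
        using D fz j unfolding feasible_def by auto
    qed
    have "\<forall>l<n. ?U (\<lambda>a b c. x a b c + (if b = j then e a c else 0)) l = ?U x l + (if l = i then D else 0)"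
    proof (intro allI impI)
      fix l
      have "(\<Sum>t<T. e l t) = (if l = i then lam * P else 0)"
        by (simp add: e_def P_def sum_distrib_left)
      also have "\<dots> = (if l = i then D else 0)" using Ppos by (simp add: lam_def)
      finally show "?U (\<lambda>a b c. x a b c + (if b = j then e a c else 0)) l = ?U x l + (if l = i then D else 0)"
        using util_shift[OF j, where v=v and dt=dt and x=x and e=e and l=l] vij by simp
    qed
    then show ?thesis using fy i Dpos by blast
  next
    assume "\<exists>k<n. (\<Sum>t<T. x k j t) > 0 \<and> \<not> (v k j = 1 \<and> ?U x k \<le> ?U x i)"
    then obtain k where k: "k < n" and X: "(\<Sum>t<T. x k j t) > 0"
      and bad: "\<not> (v k j = 1 \<and> ?U x k \<le> ?U x i)" by auto
    show ?thesis
    proof (cases "v k j = 1")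
      case False
      then have vk: "v k j = 0" using vb k j by auto
      then have ki: "i \<noteq> k" using vij by auto
      note tr = transfer[OF fx i k ki j, of 1, OF zero_le_one order.refl]
      have "\<forall>l<n. ?U (\<lambda>a b c. x a b c + (if b = j then (if a = i then 1 * x k j c else if a = k then - (1 * x k j c) else 0) else 0)) l
          = ?U x l + (if l = i then (\<Sum>t<T. x k j t) else 0)"
      proof (intro allI impI)
        fix l assume "l < n"
        show "?U (\<lambda>a b c. x a b c + (if b = j then (if a = i then 1 * x k j c else if a = k then - (1 * x k j c) else 0) else 0)) l
          = ?U x l + (if l = i then (\<Sum>t<T. x k j t) else 0)"
          unfolding tr(2) using vij vk by simp
      qed
      then show ?thesis using tr(1) i X by blast
    next
      case True
      then have gt: "?U x k > ?U x i" using bad by auto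
      then have ki: "i \<noteq> k" by auto
      define X where "X = (\<Sum>t<T. x k j t)"
      define lam where "lam = min 1 ((?U x k - ?U x i) / (2 * X))"
      have Xp: "X > 0" using X by (simp add: X_def)
      have lam0: "lam > 0" using gt Xp by (simp add: lam_def)
      have lam1: "lam \<le> 1" by (simp add: lam_def)
      note tr = transfer[OF fx i k ki j, of lam, OF less_imp_le[OF lam0] lam1]
      have eps: "lam * X > 0" using lam0 Xp by simp
      have "lam * X \<le> ((?U x k - ?U x i) / (2 * X)) * X"
        using Xp by (intro mult_right_mono) (auto simp: lam_def)
      also have "\<dots> = (?U x k - ?U x i) / 2" using Xp by simp
      finally have e2: "2 * (lam * X) \<le> ?U x k - ?U x i" by simp
      have "\<forall>l<n. ?U (\<lambda>a b c. x a b c + (if b = j then (if a = i then lam * x k j c else if a = k then - (lam * x k j c) else 0) else 0)) l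
          = ?U x l + (if l = i then lam * X else if l = k then - (lam * X) else 0)"
        using tr(2) vij True unfolding X_def by auto
      then show ?thesis using tr(1) i k ki eps e2 by blast
    qed
  qed
qed



lemma Lsum_util: "Lsum c (utilities n m T v dt x) = (\<Sum>l<n. min (utility m T v dt x l) c)"
  unfolding utilities_def by (rule Lsum_map)

lemma len_util: "length (utilities n m T v dt x) = n"
  by (simp add: utilities_def)

lemma sum_two:
  fixes n i k :: nat and D :: "nat \<Rightarrow> real"
  assumes "i < n" "k < n" "i \<noteq> k" "\<forall>l<n. l \<noteq> i \<and> l \<noteq> k \<longrightarrow> D l = 0"
  shows "(\<Sum>l<n. D l) = D i + D k"
proof -
  have "(\<Sum>l<n. D l) = (\<Sum>l<n. if l = i then D i else if l = k then D k else 0)"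
    by (rule sum.cong) (use assms in auto)
  also have "\<dots> = D i + D k" by (rule delta2[OF assms(1-3)])
  finally show ?thesis .
qed

lemma lex_P1:
  assumes i: "i < n" and ep: "\<epsilon> > 0"
    and U: "\<forall>l<n. utility m T v dt y l = utility m T v dt x l + (if l = i then \<epsilon> else 0)"
  shows "leximin_greater (utilities n m T v dt y) (utilities n m T v dt x)"
proof (rule LG2)
  show "length (utilities n m T v dt x) = length (utilities n m T v dt y)" by (simp add: len_util)
  have le: "utility m T v dt x l \<le> utility m T v dt y l" if "l < n" for l
    using U that ep by (cases "l = i") auto
  show "\<forall>c. Lsum c (utilities n m T v dt x) \<le> Lsum c (utilities n m T v dt y)"
  proof
    fix c
    have "(\<Sum>l<n. min (utility m T v dt x l) c) \<le> (\<Sum>l<n. min (utility m T v dt y l) c)"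
    proof (rule sum_mono)
      fix l assume "l \<in> {..<n}"
      then have "utility m T v dt x l \<le> utility m T v dt y l" using le by simp
      then show "min (utility m T v dt x l) c \<le> min (utility m T v dt y l) c" by simp
    qed
    then show "Lsum c (utilities n m T v dt x) \<le> Lsum c (utilities n m T v dt y)"
      unfolding Lsum_util .
  qed
  let ?c = "utility m T v dt x i + \<epsilon>"
  have "(\<Sum>l<n. min (utility m T v dt x l) ?c) < (\<Sum>l<n. min (utility m T v dt y l) ?c)"
  proof (rule sum_strict_mono_ex1)
    show "\<forall>l\<in>{..<n}. min (utility m T v dt x l) ?c \<le> min (utility m T v dt y l) ?c"
      using le by (simp add: min.coboundedI1)
    have "utility m T v dt y i = ?c" using U i by simp
    then have "min (utility m T v dt x i) ?c < min (utility m T v dt y i) ?c" using ep by simp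
    then show "\<exists>l\<in>{..<n}. min (utility m T v dt x l) ?c < min (utility m T v dt y l) ?c"
      using i by blast
  qed simp
  then show "\<exists>c. Lsum c (utilities n m T v dt x) < Lsum c (utilities n m T v dt y)"
    unfolding Lsum_util by blast
qed

lemma lex_P2:
  assumes i: "i < n" and k: "k < n" and ik: "i \<noteq> k" and ep: "\<epsilon> > 0"
    and gap: "2 * \<epsilon> \<le> utility m T v dt x k - utility m T v dt x i"
    and U: "\<forall>l<n. utility m T v dt y l = utility m T v dt x l +
                 (if l = i then \<epsilon> else if l = k then - \<epsilon> else 0)"
  shows "leximin_greater (utilities n m T v dt y) (utilities n m T v dt x)"
proof (rule LG2)
  let ?a = "utility m T v dt x" and ?b = "utility m T v dt y"
  have diff: "(\<Sum>l<n. min (?b l) c) - (\<Sum>l<n. min (?a l) c)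
      = (min (?b i) c - min (?a i) c) + (min (?b k) c - min (?a k) c)" for c
    unfolding sum_subtractf[symmetric] by (rule sum_two[OF i k ik]) (use U in auto)
  have bi: "?b i = ?a i + \<epsilon>" and bk: "?b k = ?a k - \<epsilon>" using U i k ik by auto
  show "length (utilities n m T v dt x) = length (utilities n m T v dt y)" by (simp add: len_util)
  show "\<forall>c. Lsum c (utilities n m T v dt x) \<le> Lsum c (utilities n m T v dt y)"
  proof
    fix c
    have "(min (?b i) c - min (?a i) c) + (min (?b k) c - min (?a k) c) \<ge> 0"
      unfolding bi bk using gap ep by (auto simp: min_def)
    then show "Lsum c (utilities n m T v dt x) \<le> Lsum c (utilities n m T v dt y)"
      unfolding Lsum_util using diff[of c] by linarith
  qed
  let ?c = "?a i + \<epsilon>"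
  have "(min (?b i) ?c - min (?a i) ?c) + (min (?b k) ?c - min (?a k) ?c) > 0"
    unfolding bi bk using gap ep by (auto simp: min_def)
  then have "Lsum ?c (utilities n m T v dt x) < Lsum ?c (utilities n m T v dt y)"
    unfolding Lsum_util using diff[of ?c] by linarith
  then show "\<exists>c. Lsum c (utilities n m T v dt x) < Lsum c (utilities n m T v dt y)" by blast
qed

lemma mnw_P1:
  assumes i: "i < n" and ep: "\<epsilon> > 0" and xp: "\<forall>l<n. utility m T v dt x l > 0"
    and U: "\<forall>l<n. utility m T v dt y l = utility m T v dt x l + (if l = i then \<epsilon> else 0)"
  shows "(\<forall>l<n. utility m T v dt y l > 0) \<and>
     (\<Sum>l<n. ln (utility m T v dt x l)) < (\<Sum>l<n. ln (utility m T v dt y l))"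
proof
  have le: "utility m T v dt x l \<le> utility m T v dt y l" if "l < n" for l
    using U that ep by (cases "l = i") auto
  show yp: "\<forall>l<n. utility m T v dt y l > 0"
  proof (intro allI impI)
    fix l assume "l < n"
    then show "utility m T v dt y l > 0" using le[of l] xp by force
  qed
  show "(\<Sum>l<n. ln (utility m T v dt x l)) < (\<Sum>l<n. ln (utility m T v dt y l))"
  proof (rule sum_strict_mono_ex1)
    show "\<forall>l\<in>{..<n}. ln (utility m T v dt x l) \<le> ln (utility m T v dt y l)"
    proof
      fix l assume "l \<in> {..<n}"
      then have "l < n" by simp
      then have "0 < utility m T v dt x l" using xp by simp
      then show "ln (utility m T v dt x l) \<le> ln (utility m T v dt y l)"
        using le[of l] \<open>l < n\<close> by (subst ln_le_cancel_iff) auto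
    qed
    have "utility m T v dt y i = utility m T v dt x i + \<epsilon>" using U i by simp
    moreover have "0 < utility m T v dt x i" using xp i by simp
    ultimately have "ln (utility m T v dt x i) < ln (utility m T v dt y i)" using ep
      by (subst ln_less_cancel_iff) auto
    then show "\<exists>l\<in>{..<n}. ln (utility m T v dt x l) < ln (utility m T v dt y l)"
      using i by blast
  qed simp
qed

lemma mnw_P2:
  assumes i: "i < n" and k: "k < n" and ik: "i \<noteq> k" and ep: "\<epsilon> > 0"
    and gap: "2 * \<epsilon> \<le> utility m T v dt x k - utility m T v dt x i"
    and xp: "\<forall>l<n. utility m T v dt x l > 0"
    and U: "\<forall>l<n. utility m T v dt y l = utility m T v dt x l +
                 (if l = i then \<epsilon> else if l = k then - \<epsilon> else 0)"
  shows "(\<forall>l<n. utility m T v dt y l > 0) \<and>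
     (\<Sum>l<n. ln (utility m T v dt x l)) < (\<Sum>l<n. ln (utility m T v dt y l))"
proof
  let ?a = "utility m T v dt x" and ?b = "utility m T v dt y"
  have bi: "?b i = ?a i + \<epsilon>" and bk: "?b k = ?a k - \<epsilon>" using U i k ik by auto
  have ai: "?a i > 0" using xp i by auto
  have ak: "?a k > 0" using xp k by auto
  show yp: "\<forall>l<n. ?b l > 0"
  proof (intro allI impI)
    fix l assume l: "l < n"
    show "?b l > 0"
      using U l xp[rule_format, OF l] gap ep ai by (auto simp: bi bk)
  qed
  have diff: "(\<Sum>l<n. ln (?b l)) - (\<Sum>l<n. ln (?a l))
      = (ln (?b i) - ln (?a i)) + (ln (?b k) - ln (?a k))"
    unfolding sum_subtractf[symmetric] by (rule sum_two[OF i k ik]) (use U in auto)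
  have bkp: "?a k - \<epsilon> > 0" using gap ep ai by linarith
  have "?a i * ?a k < (?a i + \<epsilon>) * (?a k - \<epsilon>)"
  proof -
    have "(?a i + \<epsilon>) * (?a k - \<epsilon>) - ?a i * ?a k = \<epsilon> * (?a k - ?a i - \<epsilon>)"
      by (simp add: algebra_simps)
    moreover have "\<epsilon> * (?a k - ?a i - \<epsilon>) > 0" using ep gap by (intro mult_pos_pos) auto
    ultimately show ?thesis by linarith
  qed
  then have "ln (?a i * ?a k) < ln ((?a i + \<epsilon>) * (?a k - \<epsilon>))"
    using ai ak bkp ep by (intro ln_less_cancel_iff[THEN iffD2]) (auto intro!: mult_pos_pos)
  then have "ln (?a i) + ln (?a k) < ln (?a i + \<epsilon>) + ln (?a k - \<epsilon>)"
    using ai ak bkp ep by (simp add: ln_mult)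
  then show "(\<Sum>l<n. ln (?a l)) < (\<Sum>l<n. ln (?b l))"
    using diff unfolding bi bk by linarith
qed

theorem theorem4:
  fixes n m T :: nat
    and st :: "nat \<Rightarrow> nat \<Rightarrow> real" and S :: "nat \<Rightarrow> real"
    and v :: "nat \<Rightarrow> nat \<Rightarrow> real" and dt :: "nat \<Rightarrow> nat \<Rightarrow> real"
  assumes st_nonneg: "\<forall>j<m. \<forall>t<T. st j t \<ge> 0"
    and S_nonneg: "\<forall>j<m. S j \<ge> 0"
    and v_binary: "\<forall>i<n. \<forall>j<m. v i j \<in> {0, 1}"
    and dt_nonneg: "\<forall>i<n. \<forall>t<T. dt i t \<ge> 0"
    and pos: "\<exists>x. feasible n m T st S x \<and> (\<forall>i<n. utility m T v dt x i > 0)"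
  shows "{x. leximin_optimal n m T st S v dt x} = {x. max_nash_welfare n m T st S v dt x}"
proof (intro equalityI subsetI; simp only: mem_Collect_eq)
  fix x assume lo: "leximin_optimal n m T st S v dt x"
  then have fx: "feasible n m T st S x" by (simp add: leximin_optimal_def)
  have C: "condC n m T st S v dt x"
  proof (rule ccontr)
    assume nC: "\<not> condC n m T st S v dt x"
    have "\<exists>y. feasible n m T st S y \<and> leximin_greater (utilities n m T v dt y) (utilities n m T v dt x)"
      using perturb[OF v_binary fx nC]
    proof (elim disjE exE conjE)
      fix y i \<epsilon> assume "feasible n m T st S y" "i < n" "\<epsilon> > 0"
        "\<forall>l<n. utility m T v dt y l = utility m T v dt x l + (if l = i then \<epsilon> else 0)"
      then show ?thesis using lex_P1 by blast
    next
      fix y i k \<epsilon> assume "feasible n m T st S y" "i < n" "k < n" "i \<noteq> k" "\<epsilon> > 0"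
        "2 * \<epsilon> \<le> utility m T v dt x k - utility m T v dt x i"
        "\<forall>l<n. utility m T v dt y l = utility m T v dt x l +
                 (if l = i then \<epsilon> else if l = k then - \<epsilon> else 0)"
      then show ?thesis using lex_P2 by blast
    qed
    then show False using lo unfolding leximin_optimal_def by blast
  qed
  obtain z where fz: "feasible n m T st S z" and zp: "\<forall>i<n. utility m T v dt z i > 0"
    using pos by blast
  have xp: "\<forall>i<n. utility m T v dt x i > 0" by (rule pos_fromC[OF v_binary fx C fz zp])
  show "max_nash_welfare n m T st S v dt x"
    unfolding max_nash_welfare_def
  proof (intro conjI allI impI)
    show "feasible n m T st S x" by (fact fx)
    show "\<And>i. i < n \<Longrightarrow> 0 < utility m T v dt x i" using xp by blast
    fix y assume "feasible n m T st S y \<and> (\<forall>i<n. 0 < utility m T v dt y i)"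
    then show "(\<Sum>i<n. ln (utility m T v dt y i)) \<le> (\<Sum>i<n. ln (utility m T v dt x i))"
      using MNW_fromC[OF v_binary fx C _ xp] by blast
  qed
next
  fix x assume mw: "max_nash_welfare n m T st S v dt x"
  then have fx: "feasible n m T st S x" and xp: "\<forall>i<n. utility m T v dt x i > 0"
    by (auto simp: max_nash_welfare_def)
  have C: "condC n m T st S v dt x"
  proof (rule ccontr)
    assume nC: "\<not> condC n m T st S v dt x"
    have "\<exists>y. feasible n m T st S y \<and> (\<forall>l<n. utility m T v dt y l > 0) \<and>
      (\<Sum>l<n. ln (utility m T v dt x l)) < (\<Sum>l<n. ln (utility m T v dt y l))"
      using perturb[OF v_binary fx nC]
    proof (elim disjE exE conjE)
      fix y i \<epsilon> assume "feasible n m T st S y" "i < n" "\<epsilon> > 0"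
        "\<forall>l<n. utility m T v dt y l = utility m T v dt x l + (if l = i then \<epsilon> else 0)"
      then show ?thesis using mnw_P1[OF _ _ xp] by blast
    next
      fix y i k \<epsilon> assume "feasible n m T st S y" "i < n" "k < n" "i \<noteq> k" "\<epsilon> > 0"
        "2 * \<epsilon> \<le> utility m T v dt x k - utility m T v dt x i"
        "\<forall>l<n. utility m T v dt y l = utility m T v dt x l +
                 (if l = i then \<epsilon> else if l = k then - \<epsilon> else 0)"
      then show ?thesis using mnw_P2[OF _ _ _ _ _ xp] by blast
    qed
    then obtain y where fy: "feasible n m T st S y"
      and yp: "\<forall>l<n. utility m T v dt y l > 0"
      and lt: "(\<Sum>l<n. ln (utility m T v dt x l)) < (\<Sum>l<n. ln (utility m T v dt y l))"
      by blast
    have "(\<Sum>l<n. ln (utility m T v dt y l)) \<le> (\<Sum>l<n. ln (utility m T v dt x l))"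
      using mw fy yp unfolding max_nash_welfare_def by blast
    then show False using lt by simp
  qed
  show "leximin_optimal n m T st S v dt x"
    unfolding leximin_optimal_def
  proof (intro conjI notI)
    show "feasible n m T st S x" by (fact fx)
    assume "\<exists>y. feasible n m T st S y \<and> leximin_greater (utilities n m T v dt y) (utilities n m T v dt x)"
    then obtain y where fy: "feasible n m T st S y"
      and lg: "leximin_greater (utilities n m T v dt y) (utilities n m T v dt x)" by blast
    obtain c where "Lsum c (utilities n m T v dt x) < Lsum c (utilities n m T v dt y)"
      using LG1[OF lg] by (auto simp: len_util)
    moreover have "(\<Sum>i<n. min (utility m T v dt y i) c) \<le> (\<Sum>i<n. min (utility m T v dt x i) c)"
      by (rule L_fromC[OF v_binary fx C fy])
    ultimately show False unfolding Lsum_util by linarith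
  qed
qed

end
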